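(* Let $f\in C^1[0,1]$ with $f(0)=0$, $h:=f'$, $q$ satisfying (q), and let $c^*$ be the threshold for $(P^{00}_c)$. For every $c>c^*$ there exists $\beta=\beta(c)<0$ with $\beta(c)\ge f(1)-c$ such that, for $b<0$, problem $(P_c)$ admits a solution $z$ with $z(1)=b$ if and only if $b\ge\beta(c)$; moreover such a solution is unique.
   Context: Condition (q): $q\in C[0,1]$, $q>0$ on $(0,1)$, $q(0)=q(1)=0$, and $\limsup_{\varphi\to0^+}q(\varphi)/\varphi<+\infty$. For $c\in\mathbb R$, a solution of problem $(P_c)$ is a function $z\in C[0,1]\cap C^1(0,1)$ with $\dot z(\varphi)=h(\varphi)-c-q(\varphi)/z(\varphi)$ and $z(\varphi)<0$ for all $\varphi\in(0,1)$, and $z(0)=0$. A solution of $(P^{00}_c)$ is a solution of $(P_c)$ which also satisfies $z(1)=0$. $c^*$ denotes the real number such that $(P^{00}_c)$ has a solution iff $c\ge c^*$ (that solution being unique). *)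

theory Defs
  imports "HOL-Analysis.Analysis"
begin

definition cond_q :: "(real \<Rightarrow> real) \<Rightarrow> bool" where
  "cond_q q \<longleftrightarrow> continuous_on {0..1} q \<and> (\<forall>x\<in>{0<..<1}. q x > 0) \<and> q 0 = 0 \<and> q 1 = 0 \<and>
     Limsup (at_right 0) (\<lambda>x. ereal (q x / x)) < \<infinity>"

definition sol_P :: "(real \<Rightarrow> real) \<Rightarrow> (real \<Rightarrow> real) \<Rightarrow> real \<Rightarrow> (real \<Rightarrow> real) \<Rightarrow> bool" where
  "sol_P h q c z \<longleftrightarrow> continuous_on {0..1} z \<and>
     (\<exists>z'. continuous_on {0<..<1} z' \<and>
        (\<forall>x\<in>{0<..<1}. (z has_real_derivative z' x) (at x) \<and> z' x = h x - c - q x / z x)) \<and>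
     (\<forall>x\<in>{0<..<1}. z x < 0) \<and> z 0 = 0"

definition sol_P00 :: "(real \<Rightarrow> real) \<Rightarrow> (real \<Rightarrow> real) \<Rightarrow> real \<Rightarrow> (real \<Rightarrow> real) \<Rightarrow> bool" where
  "sol_P00 h q c z \<longleftrightarrow> sol_P h q c z \<and> z 1 = 0"

end

theory Submission
  imports Defs
begin


lemma int_tb_deriv:
  fixes g :: "real \<Rightarrow> real"
  assumes g: "continuous_on {a..b} g" and t: "t \<in> {a..b}"
  shows "((\<lambda>t. integral {t..b} g) has_real_derivative - g t) (at t within {a..b})"
proof -
  have d: "((\<lambda>u. integral {a..u} g) has_real_derivative g t) (at t within {a..b})"
    using integral_has_vector_derivative[OF g t] has_real_derivative_iff_has_vector_derivative by blast
  have "((\<lambda>u. integral {a..b} g - integral {a..u} g) has_real_derivative - g t) (at t within {a..b})"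
    using DERIV_diff[OF DERIV_const d] by simp
  moreover have "\<And>u. u \<in> {a..b} \<Longrightarrow> integral {a..b} g - integral {a..u} g = integral {u..b} g"
  proof -
    fix u assume u: "u \<in> {a..b}"
    have "integral {a..u} g + integral {u..b} g = integral {a..b} g"
      by (rule Henstock_Kurzweil_Integration.integral_combine) (use u integrable_continuous_real[OF g] in auto)
    thus "integral {a..b} g - integral {a..u} g = integral {u..b} g" by simp
  qed
  ultimately show ?thesis
    by (rule has_field_derivative_transform_within[OF _ zero_less_one t]) simp
qed

lemma int_tb_cont:
  fixes g :: "real \<Rightarrow> real"
  assumes g: "continuous_on {a..b} g"
  shows "continuous_on {a..b} (\<lambda>t. integral {t..b} g)"
  by (rule DERIV_continuous_on[OF int_tb_deriv[OF g]])

lemma picard_back: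
  fixes G :: "real \<Rightarrow> real \<Rightarrow> real"
  assumes ab: "a \<le> b" and L: "L > 0"
    and lip: "\<And>t x y. t \<in> {a..b} \<Longrightarrow> \<bar>G t x - G t y\<bar> \<le> L * \<bar>x - y\<bar>"
    and cont: "\<And>u. continuous_on {a..b} u \<Longrightarrow> continuous_on {a..b} (\<lambda>s. G s (u s))"
  shows "\<exists>y. y b = x0 \<and> (\<forall>t\<in>{a..b}. (y has_real_derivative G t (y t)) (at t within {a..b}))"
proof -
  define W where "W t = exp (2*L*(b - t))" for t
  have Wpos: "W t > 0" for t by (simp add: W_def)
  have Wcont: "continuous_on S W" for S unfolding W_def by (intro continuous_intros)
  have Wb: "W b = 1" by (simp add: W_def)
  define \<Phi> where "\<Phi> u t = (x0 - integral {t..b} (\<lambda>s. G s (W s * u s))) / W t" for u :: "real \<Rightarrow> real" and t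
  have gcont: "continuous_on {a..b} (\<lambda>s. G s (W s * u s))" if "continuous_on {a..b} u" for u
    by (rule cont) (intro continuous_intros Wcont that)
  have \<Phi>cont: "continuous_on {a..b} (\<Phi> u)" if "continuous_on {a..b} u" for u
    unfolding \<Phi>_def
    by (intro continuous_intros int_tb_cont gcont that Wcont) (simp add: Wpos less_imp_neq[symmetric])
  have ex: "\<exists>g::real \<Rightarrow>\<^sub>C real. (\<forall>x\<in>{a..b}. apply_bcontfun g x = \<Phi> (apply_bcontfun u) x) \<and>
      (\<forall>x. apply_bcontfun g x = \<Phi> (apply_bcontfun u) (clamp a b x))" for u :: "real \<Rightarrow>\<^sub>C real"
  proof -
    have "continuous_on (cbox a b) (\<Phi> (apply_bcontfun u))"
      using \<Phi>cont[of "apply_bcontfun u"] by simp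
    from continuous_on_cbox_bcontfunE[OF this] obtain g :: "real \<Rightarrow>\<^sub>C real"
      where g1: "\<And>x. x \<in> cbox a b \<Longrightarrow> g x = \<Phi> u x" and g2: "\<And>x. g x = \<Phi> u (clamp a b x)" by metis
    show ?thesis by (rule exI[of _ g]) (use g1 g2 in \<open>auto simp: cbox_interval\<close>)
  qed
  define T where "T u = (SOME g::real \<Rightarrow>\<^sub>C real. (\<forall>x\<in>{a..b}. apply_bcontfun g x = \<Phi> (apply_bcontfun u) x) \<and>
      (\<forall>x. apply_bcontfun g x = \<Phi> (apply_bcontfun u) (clamp a b x)))" for u
  have T1: "\<forall>x\<in>{a..b}. apply_bcontfun (T u) x = \<Phi> (apply_bcontfun u) x" for u
    using someI_ex[OF ex[of u]] unfolding T_def by blast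
  have T2: "\<forall>x. apply_bcontfun (T u) x = \<Phi> (apply_bcontfun u) (clamp a b x)" for u
    using someI_ex[OF ex[of u]] unfolding T_def by blast
  have clampin: "clamp a b x \<in> {a..b}" for x :: real
    using clamp_in_interval[of a b x] ab by simp
  have intW: "integral {\<tau>..b} W = (W \<tau> - 1) / (2*L)" if "\<tau> \<le> b" for \<tau>
  proof -
    have "(W has_integral ((\<lambda>s. - W s / (2*L)) b - (\<lambda>s. - W s / (2*L)) \<tau>)) {\<tau>..b}"
    proof (rule fundamental_theorem_of_calculus[OF that])
      fix x assume "x \<in> {\<tau>..b}"
      show "((\<lambda>s. - W s / (2*L)) has_vector_derivative W x) (at x within {\<tau>..b})"
        unfolding W_def has_real_derivative_iff_has_vector_derivative[symmetric]
        using L by (auto intro!: derivative_eq_intros simp: field_simps)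
    qed
    thus ?thesis using Wb L by (simp add: integral_unique field_simps)
  qed
  have contr: "dist (T u) (T v) \<le> 1/2 * dist u v" for u v
  proof (rule dist_bound)
    fix x
    define \<tau> where "\<tau> = clamp a b x"
    have \<tau>: "\<tau> \<in> {a..b}" using clampin \<tau>_def by simp
    define d where "d = dist u v"
    define gu where "gu s = G s (W s * apply_bcontfun u s)" for s
    define gv where "gv s = G s (W s * apply_bcontfun v s)" for s
    have cu: "continuous_on {\<tau>..b} gu" unfolding gu_def
      by (rule continuous_on_subset[OF gcont]) (use \<tau> in auto)
    have cv: "continuous_on {\<tau>..b} gv" unfolding gv_def
      by (rule continuous_on_subset[OF gcont]) (use \<tau> in auto)
    have bnd: "norm (gu s - gv s) \<le> L * d * W s" if "s \<in> {\<tau>..b}" for s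
    proof -
      have "s \<in> {a..b}" using that \<tau> by auto
      hence "\<bar>gu s - gv s\<bar> \<le> L * \<bar>W s * u s - W s * v s\<bar>" unfolding gu_def gv_def by (rule lip)
      also have "\<bar>W s * u s - W s * v s\<bar> = W s * \<bar>u s - v s\<bar>"
        using Wpos[of s] by (simp add: abs_mult right_diff_distrib[symmetric])
      also have "\<bar>u s - v s\<bar> \<le> d" unfolding d_def using dist_bounded[of u s v] by (simp add: dist_real_def)
      finally show ?thesis using L Wpos[of s] by (simp add: mult_left_mono mult.commute mult.left_commute)
    qed
    have "norm (integral {\<tau>..b} (\<lambda>s. gu s - gv s)) \<le> integral {\<tau>..b} (\<lambda>s. L * d * W s)"
      by (intro integral_norm_bound_integral integrable_continuous_real continuous_intros cu cv Wcont bnd)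
    also have "\<dots> = L * d * ((W \<tau> - 1) / (2*L))"
      using intW[of \<tau>] \<tau> by simp
    finally have I: "\<bar>integral {\<tau>..b} gu - integral {\<tau>..b} gv\<bar> \<le> d * (W \<tau> - 1) / 2"
      using L integral_diff[OF integrable_continuous_real[OF cu] integrable_continuous_real[OF cv]]
      by simp
    have "dist (T u x) (T v x) = \<bar>\<Phi> u \<tau> - \<Phi> v \<tau>\<bar>" using T2 \<tau>_def by (simp add: dist_real_def)
    also have "\<dots> = \<bar>integral {\<tau>..b} gu - integral {\<tau>..b} gv\<bar> / W \<tau>"
      unfolding \<Phi>_def gu_def gv_def using Wpos[of \<tau>]
      by (simp add: diff_divide_distrib[symmetric] abs_div)
    also have "\<dots> \<le> (d * (W \<tau> - 1) / 2) / W \<tau>"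
      by (rule divide_right_mono[OF I]) (use Wpos[of \<tau>] in simp)
    also have "\<dots> \<le> 1/2 * d"
      using Wpos[of \<tau>] zero_le_dist[of u v] unfolding d_def by (simp add: field_simps)
    finally show "dist (T u x) (T v x) \<le> 1/2 * dist u v" unfolding d_def .
  qed
  obtain u where u: "T u = u" using banach_fix_type[of "1/2" T] contr by auto
  define y where "y t = W t * u t" for t
  define g where "g s = G s (y s)" for s
  have gc: "continuous_on {a..b} g" unfolding g_def y_def by (rule gcont) simp
  have yeq: "y t = x0 - integral {t..b} g" if "t \<in> {a..b}" for t
  proof -
    have "u t = \<Phi> u t" using T1[of u] that u by metis
    thus ?thesis unfolding y_def \<Phi>_def g_def y_def using Wpos[of t] by simp
  qed
  show ?thesis
  proof (intro exI conjI ballI)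
    show "y b = x0" using yeq[of b] ab by simp
    fix t assume t: "t \<in> {a..b}"
    have "((\<lambda>t. x0 - integral {t..b} g) has_real_derivative 0 - - g t) (at t within {a..b})"
      by (intro derivative_intros int_tb_deriv gc t)
    hence "((\<lambda>t. x0 - integral {t..b} g) has_real_derivative g t) (at t within {a..b})" by simp
    hence "(y has_real_derivative g t) (at t within {a..b})"
      by (rule has_field_derivative_transform_within[OF _ zero_less_one t]) (simp add: yeq)
    thus "(y has_real_derivative G t (y t)) (at t within {a..b})" unfolding g_def .
  qed
qed




context
  fixes h q :: "real \<Rightarrow> real" and c :: real
  assumes hc: "continuous_on {0..1} h" and qc: "continuous_on {0..1} q"
    and qpos: "\<forall>x\<in>{0<..<1}. q x > 0" and q0: "q 0 = 0" and q1: "q 1 = 0"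
begin

lemma qnn: "t \<in> {0..1} \<Longrightarrow> q t \<ge> 0"
  using qpos q0 q1 by (cases "t = 0 \<or> t = 1") (auto simp: less_le)

lemma lin_rep:
  assumes ab: "0 \<le> a" "a < b" "b \<le> 1"
    and c1: "continuous_on {a..b} y1" and d1: "\<forall>t\<in>{a<..<b}. (y1 has_real_derivative h t - c - q t / y1 t) (at t)"
    and n1: "\<forall>t\<in>{a..b}. y1 t < 0"
    and c2: "continuous_on {a..b} y2" and d2: "\<forall>t\<in>{a<..<b}. (y2 has_real_derivative h t - c - q t / y2 t) (at t)"
    and n2: "\<forall>t\<in>{a..b}. y2 t < 0"
  shows "\<exists>C G. (\<forall>s\<in>{a..b}. \<forall>t\<in>{a..b}. s \<le> t \<longrightarrow> G s \<le> G t) \<and> (\<forall>t\<in>{a..b}. y1 t - y2 t = C * exp (G t))"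
proof -
  define g where "g t = q t / (y1 t * y2 t)" for t
  have sub: "{a..b} \<subseteq> {0..1}" using ab by auto
  have gc: "continuous_on {a..b} g" unfolding g_def
    using n1 n2 by (intro continuous_intros continuous_on_subset[OF qc sub] c1 c2) (auto simp: less_imp_neq)
  have gnn: "g t \<ge> 0" if "t \<in> {a..b}" for t
    unfolding g_def using qnn[of t] that sub n1 n2
    by (intro divide_nonneg_pos) (auto intro: mult_neg_neg)
  define G where "G t = integral {a..t} g" for t
  have Gd: "(G has_real_derivative g t) (at t within {a..b})" if "t \<in> {a..b}" for t
    using integral_has_vector_derivative[OF gc that] has_real_derivative_iff_has_vector_derivative
    unfolding G_def by blast
  have Gc: "continuous_on {a..b} G" by (rule DERIV_continuous_on[OF Gd])
  have Gmono: "G s \<le> G t" if "s \<in> {a..b}" "t \<in> {a..b}" "s \<le> t" for s t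
  proof -
    have "integral {a..s} g + integral {s..t} g = integral {a..t} g"
      by (rule Henstock_Kurzweil_Integration.integral_combine)
        (use that integrable_continuous_real[OF continuous_on_subset[OF gc]] in auto)
    moreover have "integral {s..t} g \<ge> 0"
      by (rule integral_nonneg) (use that integrable_continuous_real[OF continuous_on_subset[OF gc]] gnn in auto)
    ultimately show ?thesis unfolding G_def by linarith
  qed
  define k where "k t = (y1 t - y2 t) * exp (- G t)" for t
  have kc: "continuous_on {a..b} k" unfolding k_def by (intro continuous_intros c1 c2 Gc)
  have kd: "(k has_real_derivative 0) (at t)" if "t \<in> {a<..<b}" for t
  proof -
    have tt: "t \<in> {a..b}" using that by auto
    have Gat: "(G has_real_derivative g t) (at t)"
      using Gd[OF tt] at_within_Icc_at[of a t b] that by auto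
    have "(k has_real_derivative ((h t - c - q t / y1 t) - (h t - c - q t / y2 t)) * exp (- G t)
         + (y1 t - y2 t) * (exp (- G t) * (- g t))) (at t)"
      unfolding k_def using d1 d2 that by (auto intro!: derivative_eq_intros Gat)
    moreover have "((h t - c - q t / y1 t) - (h t - c - q t / y2 t)) * exp (- G t)
         + (y1 t - y2 t) * (exp (- G t) * (- g t)) = 0"
    proof -
      have "y1 t \<noteq> 0" "y2 t \<noteq> 0" using n1 n2 tt by (auto simp: less_imp_neq)
      thus ?thesis unfolding g_def by (simp add: field_simps)
    qed
    ultimately show ?thesis by simp
  qed
  show ?thesis
  proof (intro exI conjI ballI impI)
    fix s t assume "s \<in> {a..b}" "t \<in> {a..b}" "s \<le> t" thus "G s \<le> G t" by (rule Gmono)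
  next
    fix t assume t: "t \<in> {a..b}"
    have "k t = k a"
    proof (cases "t = a")
      case False
      hence "a < t" using t by auto
      show ?thesis
        by (rule DERIV_isconst_end[OF \<open>a < t\<close> continuous_on_subset[OF kc]]) (use t kd in auto)
    qed simp
    thus "y1 t - y2 t = k a * exp (G t)"
      unfolding k_def by (simp add: exp_minus field_simps)
  qed
qed


lemma lin_order:
  assumes ab: "0 \<le> a" "a < b" "b \<le> 1"
    and c1: "continuous_on {a..b} y1" and d1: "\<forall>t\<in>{a<..<b}. (y1 has_real_derivative h t - c - q t / y1 t) (at t)"
    and n1: "\<forall>t\<in>{a..b}. y1 t < 0"
    and c2: "continuous_on {a..b} y2" and d2: "\<forall>t\<in>{a<..<b}. (y2 has_real_derivative h t - c - q t / y2 t) (at t)"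
    and n2: "\<forall>t\<in>{a..b}. y2 t < 0"
    and le: "y2 b \<le> y1 b" and t: "t \<in> {a..b}"
  shows "0 \<le> y1 t - y2 t \<and> y1 t - y2 t \<le> y1 b - y2 b \<and> (y2 b < y1 b \<longrightarrow> y2 t < y1 t)"
proof -
  obtain C G where G: "\<forall>s\<in>{a..b}. \<forall>t\<in>{a..b}. s \<le> t \<longrightarrow> G s \<le> G t"
    and rep: "\<forall>t\<in>{a..b}. y1 t - y2 t = C * exp (G t)"
    using lin_rep[OF ab c1 d1 n1 c2 d2 n2] by blast
  have bb: "b \<in> {a..b}" using ab by auto
  have Cb: "C * exp (G b) = y1 b - y2 b" using rep bb by auto
  hence "C * exp (G b) \<ge> 0" using le by simp
  hence C: "C \<ge> 0" by (simp add: zero_le_mult_iff)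
  have "exp (G t) \<le> exp (G b)" using G t bb by auto
  hence "C * exp (G t) \<le> C * exp (G b)" using C by (rule mult_left_mono)
  moreover have "y2 b < y1 b \<longrightarrow> C > 0" using rep bb C by (auto simp: less_le)
  moreover have "y1 t - y2 t = C * exp (G t)" using rep t by auto
  moreover have "C * exp (G t) \<ge> 0" using C by simp
  moreover have "C > 0 \<Longrightarrow> C * exp (G t) > 0" by simp
  ultimately show ?thesis using Cb by (smt (verit))
qed

lemma lin_uniq:
  assumes ab: "0 \<le> a" "a < b" "b \<le> 1"
    and c1: "continuous_on {a..b} y1" and d1: "\<forall>t\<in>{a<..<b}. (y1 has_real_derivative h t - c - q t / y1 t) (at t)"
    and n1: "\<forall>t\<in>{a..b}. y1 t < 0"
    and c2: "continuous_on {a..b} y2" and d2: "\<forall>t\<in>{a<..<b}. (y2 has_real_derivative h t - c - q t / y2 t) (at t)"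
    and n2: "\<forall>t\<in>{a..b}. y2 t < 0"
    and eq: "y1 b = y2 b" and t: "t \<in> {a..b}"
  shows "y1 t = y2 t"
  using lin_order[OF ab c1 d1 n1 c2 d2 n2 _ t] eq by simp


lemma backsol_a:
  assumes b0: "b0 < 0" and a: "0 < a" "a < 1"
  shows "\<exists>y. continuous_on {a..1} y \<and> (\<forall>t\<in>{a<..<1}. (y has_real_derivative h t - c - q t / y t) (at t))
     \<and> (\<forall>t\<in>{a..1}. y t < 0) \<and> y 1 = b0"
proof -
  have "bounded ((\<lambda>t. h t - c) ` {0..1})"
    by (intro compact_imp_bounded compact_continuous_image continuous_intros hc) simp
  then obtain K where K: "K > 0" "\<forall>t\<in>{0..1}. \<bar>h t - c\<bar> \<le> K" unfolding bounded_pos by auto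
  have "bounded (q ` {0..1})"
    by (intro compact_imp_bounded compact_continuous_image qc) simp
  then obtain Q where Q: "Q > 0" "\<forall>t\<in>{0..1}. \<bar>q t\<bar> \<le> Q" unfolding bounded_pos by auto
  define \<epsilon>1 where "\<epsilon>1 = min (1 - a) (-b0/(2*K))"
  define t1 where "t1 = 1 - \<epsilon>1"
  have bK: "-b0/(2*K) > 0" using b0 K by (simp add: divide_neg_pos)
  have e1: "\<epsilon>1 > 0" unfolding \<epsilon>1_def using a bK by simp
  have e1a: "\<epsilon>1 \<le> 1 - a" "\<epsilon>1 \<le> -b0/(2*K)" unfolding \<epsilon>1_def by simp_all
  have t1: "a \<le> t1" "t1 < 1" unfolding t1_def using e1 e1a by linarith+
  have "K * \<epsilon>1 \<le> K * (-b0/(2*K))" using e1a K by (intro mult_left_mono) auto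
  also have "\<dots> = -b0/2" using K by simp
  finally have Ke1: "K * \<epsilon>1 \<le> -b0/2" .
  obtain m where m: "m \<in> {a..t1}" "\<forall>t\<in>{a..t1}. q m \<le> q t"
    using continuous_attains_inf[of "{a..t1}" q] continuous_on_subset[OF qc, of "{a..t1}"] t1 a by auto
  define qm where "qm = q m"
  have qm: "qm > 0" unfolding qm_def using qpos m t1 a by auto
  define \<eta> where "\<eta> = min (-b0/4) (qm/(2*K))"
  have eta: "\<eta> > 0" unfolding \<eta>_def using qm K b0 by simp
  have eta2: "\<eta> \<le> qm/(2*K)" unfolding \<eta>_def by simp
  have "\<eta> * (2*K) \<le> qm" using eta2 K by (simp add: pos_le_divide_eq)
  hence etaK: "2 * \<eta> * K \<le> qm" by (simp add: algebra_simps)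
  have etab: "\<eta> \<le> -b0/4" unfolding \<eta>_def by simp
  define \<delta> where "\<delta> = \<eta>/2"
  have delta: "\<delta> > 0" "\<delta> < \<eta>" unfolding \<delta>_def using eta by auto
  define Gd where "Gd t y = h t - c - q t / min y (-\<delta>)" for t y
  have sub: "{a..1} \<subseteq> {0..1}" using a by auto
  have lip: "\<bar>Gd t x - Gd t y\<bar> \<le> (Q/\<delta>^2) * \<bar>x - y\<bar>" if t: "t \<in> {a..1}" for t x y
  proof -
    define mx where "mx = min x (-\<delta>)"
    define my where "my = min y (-\<delta>)"
    have mx: "mx \<le> -\<delta>" and my: "my \<le> -\<delta>" unfolding mx_def my_def by auto
    have mxmy: "mx * my > 0" using mx my delta by (intro mult_neg_neg) auto
    have dm: "\<bar>my - mx\<bar> \<le> \<bar>x - y\<bar>" unfolding mx_def my_def by (auto simp: min_def abs_if)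
    have tt: "t \<in> {0..1}" using t sub by auto
    have q0': "0 \<le> q t" "q t \<le> Q" using qnn[OF tt] Q(2)[rule_format, OF tt] by (auto simp: abs_le_iff)
    have "Gd t x - Gd t y = q t * (mx - my) / (mx * my)"
      unfolding Gd_def mx_def[symmetric] my_def[symmetric] using mx my delta
      by (simp add: field_simps)
    hence "\<bar>Gd t x - Gd t y\<bar> = q t * \<bar>mx - my\<bar> / (mx * my)"
      using mx my delta q0' by (simp add: abs_mult abs_div mult_neg_neg)
    also have "\<dots> \<le> Q * \<bar>x - y\<bar> / (mx * my)"
      using mxmy q0' dm
      by (intro divide_right_mono mult_mono) (auto simp: abs_minus_commute)
    also have "\<dots> \<le> Q * \<bar>x - y\<bar> / (\<delta> * \<delta>)"
    proof (rule divide_left_mono)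
      have "\<delta> * \<delta> \<le> (-mx) * (-my)" using mx my delta by (intro mult_mono) auto
      thus "\<delta> * \<delta> \<le> mx * my" by simp
    qed (use Q delta mxmy in auto)
    finally show ?thesis by (simp add: power2_eq_square)
  qed
  have cont: "continuous_on {a..1} (\<lambda>s. Gd s (u s))" if "continuous_on {a..1} u" for u
    unfolding Gd_def using delta
    by (intro continuous_intros continuous_on_subset[OF hc sub] continuous_on_subset[OF qc sub] that) auto
  obtain y where y1: "y 1 = b0" and yd: "\<forall>t\<in>{a..1}. (y has_real_derivative Gd t (y t)) (at t within {a..1})"
    using picard_back[of a 1 "Q/\<delta>^2" Gd b0] lip cont a Q delta by auto
  have yc: "continuous_on {a..1} y" by (rule DERIV_continuous_on) (use yd in blast)
  have ydat: "(y has_real_derivative Gd t (y t)) (at t)" if "t \<in> {a<..<1}" for t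
  proof -
    have tt: "t \<in> {a..1}" using that by auto
    have "(y has_real_derivative Gd t (y t)) (at t within {a..1})" using yd tt by blast
    thus ?thesis using at_within_Icc_at[of a t 1] that by simp
  qed
  have Gge: "Gd t x \<ge> -K" if "t \<in> {a..1}" for t x
  proof -
    have "q t / min x (-\<delta>) \<le> 0" using qnn[of t] that sub delta
      by (intro divide_nonneg_neg) auto
    moreover have "\<bar>h t - c\<bar> \<le> K" using K(2) that sub by blast
    ultimately show ?thesis unfolding Gd_def by (auto simp: abs_le_iff)
  qed
  have upper: "y t \<le> b0 + K * (1 - t)" if t: "t \<in> {a..1}" for t
  proof -
    have c1: "continuous_on {t..1} (\<lambda>s. y s + K * s)"
      by (intro continuous_intros continuous_on_subset[OF yc]) (use t in auto)
    have d1: "\<exists>l. ((\<lambda>s. y s + K * s) has_real_derivative l) (at x) \<and> 0 \<le> l" if "t < x" "x < 1" for x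
    proof -
      have x: "x \<in> {a<..<1}" using t that by auto
      have "((\<lambda>s. y s + K * s) has_real_derivative Gd x (y x) + K) (at x)"
        using ydat[OF x] by (auto intro!: derivative_eq_intros)
      moreover have "0 \<le> Gd x (y x) + K" using Gge[of x "y x"] x by auto
      ultimately show ?thesis by blast
    qed
    have "y t + K * t \<le> y 1 + K * 1"
      using DERIV_nonneg_imp_increasing_open[of t 1 "\<lambda>s. y s + K * s", OF _ d1 c1] t by auto
    thus ?thesis using y1 by (simp add: algebra_simps)
  qed
  have right: "y t \<le> b0/2" if t: "t \<in> {t1..1}" for t
  proof -
    have "t \<in> {a..1}" using t t1 by auto
    hence "y t \<le> b0 + K * (1 - t)" by (rule upper)
    also have "K * (1 - t) \<le> K * \<epsilon>1" using t K unfolding t1_def by (intro mult_left_mono) auto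
    finally show ?thesis using Ke1 by simp
  qed
  have left: "y t < -\<delta>" if t: "t \<in> {a..t1}" for t
  proof (rule ccontr)
    assume "\<not> y t < -\<delta>"
    define A where "A = {a..t1} \<inter> y -` {-\<delta>..}"
    have Ane: "A \<noteq> {}" using t \<open>\<not> y t < -\<delta>\<close> unfolding A_def by auto
    have sub1: "{a..t1} \<subseteq> {a..1}" using t1 by auto
    have "closed A" unfolding A_def
      by (rule continuous_closed_preimage[OF continuous_on_subset[OF yc sub1]]) auto
    moreover have "bounded A" unfolding A_def by (rule bounded_subset[of "{a..t1}"]) auto
    ultimately have "compact A" by (simp add: compact_eq_bounded_closed)
    then obtain t2 where t2A: "t2 \<in> A" and t2max: "\<forall>s\<in>A. s \<le> t2"
      using compact_attains_sup Ane by blast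
    have t2: "a \<le> t2" "t2 \<le> t1" "y t2 \<ge> -\<delta>" using t2A unfolding A_def by auto
    have "y t1 \<le> b0/2" using right t1 by auto
    hence "y t1 < -\<delta>" using etab delta b0 by linarith
    hence "t2 \<noteq> t1" using t2 by auto
    hence t2t1: "t2 < t1" using t2 by auto
    have yt2: "y t2 \<le> -\<delta>"
    proof (rule ccontr)
      assume "\<not> y t2 \<le> -\<delta>"
      hence pos: "y t2 + \<delta> > 0" by simp
      have "t2 \<in> {a..1}" using t2 t1 by auto
      then obtain d where d: "d > 0" "\<forall>x'\<in>{a..1}. dist x' t2 < d \<longrightarrow> dist (y x') (y t2) < y t2 + \<delta>"
        using yc pos unfolding continuous_on_iff by blast
      define \<tau> where "\<tau> = min (t2 + d/2) t1"
      have \<tau>: "\<tau> \<in> {a..1}" "dist \<tau> t2 < d" "t2 < \<tau>" "\<tau> \<le> t1"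
        unfolding \<tau>_def using d t2 t2t1 t1 by (auto simp: dist_real_def)
      hence "dist (y \<tau>) (y t2) < y t2 + \<delta>" using d by auto
      hence "y \<tau> \<ge> -\<delta>" by (auto simp: dist_real_def)
      hence "\<tau> \<in> A" unfolding A_def using \<tau> t2 by auto
      thus False using t2max \<tau> by force
    qed
    have yt2e: "y t2 = -\<delta>" using yt2 t2 by auto
    define B where "B = {t2..t1} \<inter> y -` {..-\<eta>}"
    have sub2: "{t2..t1} \<subseteq> {a..1}" using t2 t1 by auto
    have "y t1 \<le> -\<eta>" using \<open>y t1 \<le> b0/2\<close> etab b0 by linarith
    hence "t1 \<in> B" unfolding B_def using t2t1 by auto
    hence Bne: "B \<noteq> {}" by auto
    have "closed B" unfolding B_def
      by (rule continuous_closed_preimage[OF continuous_on_subset[OF yc sub2]]) auto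
    moreover have "bounded B" unfolding B_def by (rule bounded_subset[of "{t2..t1}"]) auto
    ultimately have "compact B" by (simp add: compact_eq_bounded_closed)
    then obtain t3 where t3B: "t3 \<in> B" and t3min: "\<forall>s\<in>B. t3 \<le> s"
      using compact_attains_inf Bne by blast
    have t3: "t2 \<le> t3" "t3 \<le> t1" "y t3 \<le> -\<eta>" using t3B unfolding B_def by auto
    have "t3 \<noteq> t2" using t3 yt2e delta by auto
    hence t23: "t2 < t3" using t3 by auto
    have mid: "-\<eta> < y s \<and> y s < -\<delta>" if s: "t2 < s" "s < t3" for s
    proof
      show "-\<eta> < y s"
      proof (rule ccontr)
        assume "\<not> -\<eta> < y s"
        hence "s \<in> B" unfolding B_def using s t3 by auto
        thus False using t3min s by force
      qed
      show "y s < -\<delta>"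
      proof (rule ccontr)
        assume "\<not> y s < -\<delta>"
        hence "s \<in> A" unfolding A_def using s t3 t2 by auto
        thus False using t2max s by force
      qed
    qed
    have sub3: "{t2..t3} \<subseteq> {a..1}" using t2 t3 t1 by auto
    have Ed: "((\<lambda>s. y s ^ 2) has_real_derivative 2 * y s * Gd s (y s)) (at s)" if s: "t2 < s" "s < t3" for s
    proof -
      have "s \<in> {a<..<1}" using s t2 t3 t1 by auto
      thus ?thesis by (auto intro!: derivative_eq_intros ydat)
    qed
    obtain l \<xi> where xi: "t2 < \<xi>" "\<xi> < t3" and ld: "((\<lambda>s. y s ^ 2) has_real_derivative l) (at \<xi>)"
      and leq: "y t3 ^ 2 - y t2 ^ 2 = (t3 - t2) * l"
      using MVT[OF t23, of "\<lambda>s. y s ^ 2"] continuous_on_subset[OF yc sub3] Ed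
      by (auto intro!: continuous_intros simp: real_differentiable_def)
    have l: "l = 2 * y \<xi> * Gd \<xi> (y \<xi>)" using DERIV_unique[OF ld Ed[OF xi]] .
    have yxi: "-\<eta> < y \<xi>" "y \<xi> < -\<delta>" using mid[OF xi] by auto
    have xiin: "\<xi> \<in> {a..t1}" using xi t2 t3 by auto
    have "Gd \<xi> (y \<xi>) = h \<xi> - c - q \<xi> / y \<xi>" unfolding Gd_def using yxi by simp
    hence l2: "l = 2 * y \<xi> * (h \<xi> - c) - 2 * q \<xi>" using l yxi delta by (simp add: field_simps)
    have "2 * y \<xi> * (h \<xi> - c) \<le> 2 * \<eta> * K"
    proof -
      have "\<bar>y \<xi>\<bar> \<le> \<eta>" using yxi delta by auto
      moreover have "\<bar>h \<xi> - c\<bar> \<le> K" using K(2) xiin t1 a by auto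
      ultimately have "\<bar>y \<xi> * (h \<xi> - c)\<bar> \<le> \<eta> * K" by (simp add: abs_mult mult_mono')
      thus ?thesis by (simp add: abs_le_iff)
    qed
    moreover have "q \<xi> \<ge> qm" using m xiin unfolding qm_def by auto
    ultimately have "l < 0" using l2 etaK qm by linarith
    hence "y t3 ^ 2 < y t2 ^ 2" using leq t23 by (smt (verit) mult_pos_neg)
    moreover have "y t2 ^ 2 = \<delta>^2" using yt2e by simp
    moreover have "\<eta>^2 \<le> y t3 ^ 2" using t3 eta
      by (smt (verit, best) power_mono power2_minus)
    moreover have "\<delta>^2 < \<eta>^2" using delta by (simp add: power_strict_mono)
    ultimately show False by linarith
  qed
  have allneg: "y t < -\<delta>" if "t \<in> {a..1}" for t
  proof (cases "t \<le> t1")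
    case True thus ?thesis using left that by auto
  next
    case False thus ?thesis using right[of t] that etab delta b0 by auto
  qed
  show ?thesis
  proof (intro exI conjI ballI)
    show "continuous_on {a..1} y" by (rule yc)
    show "y 1 = b0" by (rule y1)
    fix t assume t: "t \<in> {a..1}" thus "y t < 0" using allneg[OF t] delta by auto
  next
    fix t assume t: "t \<in> {a<..<1}"
    hence "y t < -\<delta>" using allneg by auto
    hence "Gd t (y t) = h t - c - q t / y t" unfolding Gd_def by simp
    thus "(y has_real_derivative h t - c - q t / y t) (at t)" using ydat[OF t] by simp
  qed
qed

lemma backsol:
  assumes b0: "b0 < 0"
  shows "\<exists>z. continuous_on {0<..1} z \<and> (\<forall>t\<in>{0<..<1}. (z has_real_derivative h t - c - q t / z t) (at t))
     \<and> (\<forall>t\<in>{0<..1}. z t < 0) \<and> z 1 = b0"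
proof -
  define P where "P a y \<longleftrightarrow> continuous_on {a..1} y \<and> (\<forall>t\<in>{a<..<1}. (y has_real_derivative h t - c - q t / y t) (at t))
     \<and> (\<forall>t\<in>{a..1}. y t < 0) \<and> y 1 = b0" for a y
  define A where "A n = 1 / (real n + 2)" for n :: nat
  have A: "0 < A n" "A n < 1" for n unfolding A_def by auto
  define Y where "Y n = (SOME y. P (A n) y)" for n
  have PY: "P (A n) (Y n)" for n
    unfolding Y_def using backsol_a[OF b0 A(1)[of n] A(2)[of n]] unfolding P_def by (rule someI_ex)
  have agree: "Y n t = Y m t" if "t \<in> {A n..1}" "t \<in> {A m..1}" for n m t
  proof -
    define a where "a = max (A n) (A m)"
    have a: "0 \<le> a" "a < 1" unfolding a_def using A[of n] A[of m] by (auto simp: max_def)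
    have sn: "{a..1} \<subseteq> {A n..1}" "{a<..<1} \<subseteq> {A n<..<1}" unfolding a_def by auto
    have sm: "{a..1} \<subseteq> {A m..1}" "{a<..<1} \<subseteq> {A m<..<1}" unfolding a_def by auto
    show ?thesis
    proof (rule lin_uniq[OF a(1) a(2) order_refl, of "Y n" "Y m" t])
      show "continuous_on {a..1} (Y n)" using PY[of n] sn unfolding P_def by (auto intro: continuous_on_subset)
      show "continuous_on {a..1} (Y m)" using PY[of m] sm unfolding P_def by (auto intro: continuous_on_subset)
      show "\<forall>t\<in>{a<..<1}. (Y n has_real_derivative h t - c - q t / Y n t) (at t)" using PY[of n] sn unfolding P_def by blast
      show "\<forall>t\<in>{a<..<1}. (Y m has_real_derivative h t - c - q t / Y m t) (at t)" using PY[of m] sm unfolding P_def by blast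
      show "\<forall>t\<in>{a..1}. Y n t < 0" using PY[of n] sn unfolding P_def by blast
      show "\<forall>t\<in>{a..1}. Y m t < 0" using PY[of m] sm unfolding P_def by blast
      show "Y n 1 = Y m 1" using PY[of n] PY[of m] unfolding P_def by simp
      show "t \<in> {a..1}" using that unfolding a_def by auto
    qed
  qed
  define N where "N t = nat \<lceil>1/t\<rceil>" for t :: real
  have NA: "A (N t) < t" if "t > 0" for t
  proof -
    have "1/t \<le> real (N t)" unfolding N_def by (rule real_nat_ceiling_ge)
    hence "1/t < real (N t) + 2" by linarith
    thus ?thesis unfolding A_def using that by (simp add: field_simps)
  qed
  define z where "z t = Y (N t) t" for t
  have zY: "z t = Y n t" if "t \<in> {A n..1}" for n t
  proof -
    have "t > 0" using that A[of n] by auto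
    hence "A (N t) < t" by (rule NA)
    hence "t \<in> {A (N t)..1}" using that by auto
    thus ?thesis unfolding z_def using agree[OF _ that] by blast
  qed
  show ?thesis
  proof (intro exI conjI ballI)
    show "continuous_on {0<..1} z"
      unfolding continuous_on_eq_continuous_within
    proof
      fix x :: real assume x: "x \<in> {0<..1}"
      define n where "n = N x"
      have An: "A n < x" using NA x unfolding n_def by auto
      have "continuous_on {A n..1} (Y n)" using PY[of n] unfolding P_def by blast
      moreover have "continuous_on {A n..1} z = continuous_on {A n..1} (Y n)"
        by (rule continuous_on_cong[OF refl]) (rule zY)
      ultimately have "continuous_on {A n..1} z" by simp
      hence "continuous (at x within {A n..1}) z" using x An
        unfolding continuous_on_eq_continuous_within by auto
      moreover have "at x within {0<..1} = at x within {A n..1}"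
        by (rule at_within_nhd[of x "{A n<..}"]) (use x An A[of n] in auto)
      ultimately show "continuous (at x within {0<..1}) z" by simp
    qed
  next
    fix t :: real assume t: "t \<in> {0<..<1}"
    define n where "n = N t"
    have An: "A n < t" using NA t unfolding n_def by auto
    have "(Y n has_real_derivative h t - c - q t / Y n t) (at t)" using PY[of n] An t unfolding P_def by auto
    moreover have "z t = Y n t" using zY An t by auto
    ultimately have "(Y n has_real_derivative h t - c - q t / z t) (at t)" by simp
    thus "(z has_real_derivative h t - c - q t / z t) (at t)"
      by (rule has_field_derivative_transform_within_open[of _ _ _ "{A n<..<1}"]) (use An t zY[of _ n] in auto)
  next
    fix t :: real assume t: "t \<in> {0<..1}"
    define n where "n = N t"
    have An: "A n < t" using NA t unfolding n_def by auto
    thus "z t < 0" using zY[of t n] PY[of n] t unfolding P_def by auto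
  next
    have "A 0 < 1" using A by simp
    thus "z 1 = b0" using zY[of 1 0] PY[of 0] unfolding P_def by auto
  qed
qed

lemma to_sol:
  assumes zc: "continuous_on {0<..1} z"
    and zd: "\<forall>t\<in>{0<..<1}. (z has_real_derivative h t - c - q t / z t) (at t)"
    and zn: "\<forall>t\<in>{0<..1}. z t < 0"
    and lim: "\<forall>e>0. \<exists>d>0. \<forall>t. 0 < t \<and> t < d \<longrightarrow> -e < z t"
  shows "sol_P h q c (\<lambda>t. if t = 0 then 0 else z t)"
proof -
  define Z where "Z t = (if t = 0 then 0 else z t)" for t :: real
  have ZZ: "t \<noteq> 0 \<Longrightarrow> Z t = z t" for t unfolding Z_def by simp
  have Zc: "continuous_on {0..1} Z"
    unfolding continuous_on_eq_continuous_within
  proof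
    fix x :: real assume x: "x \<in> {0..1}"
    show "continuous (at x within {0..1}) Z"
    proof (cases "x = 0")
      case True
      show ?thesis unfolding continuous_within_eps_delta
      proof (intro allI impI)
        fix e :: real assume e: "e > 0"
        then obtain d where d: "d > 0" "\<forall>t. 0 < t \<and> t < d \<longrightarrow> -e < z t" using lim by blast
        show "\<exists>d>0. \<forall>x'\<in>{0..1}. dist x' x < d \<longrightarrow> dist (Z x') (Z x) < e"
        proof (intro exI[of _ d] conjI ballI impI)
          fix x' :: real assume x': "x' \<in> {0..1}" "dist x' x < d"
          show "dist (Z x') (Z x) < e"
          proof (cases "x' = 0")
            case True thus ?thesis using e \<open>x = 0\<close> by (simp add: Z_def)
          next
            case False
            hence "0 < x'" "x' < d" using x' \<open>x = 0\<close> by (auto simp: dist_real_def)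
            hence "-e < z x'" "z x' < 0" using d zn x' by auto
            thus ?thesis using False \<open>x = 0\<close> by (simp add: Z_def dist_real_def)
          qed
        qed (use d in auto)
      qed
    next
      case False
      hence xp: "x > 0" using x by auto
      have "continuous (at x within {0<..1}) z" using zc x xp
        unfolding continuous_on_eq_continuous_within by auto
      moreover have "at x within {0<..1} = at x within {0..1}"
        by (rule at_within_nhd[of x "{0<..}"]) (use x xp in auto)
      ultimately have "continuous (at x within {0..1}) z" by simp
      thus ?thesis
        by (rule continuous_transform_within[of _ _ _ x]) (use xp x in \<open>auto simp: Z_def dist_real_def\<close>)
    qed
  qed
  have Zc2: "continuous_on {0<..<1} Z"
    by (rule continuous_on_subset[OF Zc]) auto
  have Zn: "\<forall>t\<in>{0<..<1}. Z t < 0" using zn ZZ by auto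
  show ?thesis
    unfolding sol_P_def Z_def[symmetric]
  proof (intro conjI exI[of _ "\<lambda>t. h t - c - q t / Z t"] ballI)
    show "continuous_on {0..1} Z" by (rule Zc)
    show "continuous_on {0<..<1} (\<lambda>t. h t - c - q t / Z t)"
      using Zn by (intro continuous_intros continuous_on_subset[OF hc] continuous_on_subset[OF qc] Zc2)
        (auto simp: less_imp_neq)
    fix t :: real assume t: "t \<in> {0<..<1}"
    thus "Z t < 0" using Zn by auto
    have "(z has_real_derivative h t - c - q t / Z t) (at t)" using zd t ZZ[of t] by auto
    thus "(Z has_real_derivative h t - c - q t / Z t) (at t)"
      by (rule has_field_derivative_transform_within_open[of _ _ _ "{0<..}"]) (use t ZZ in auto)
    show "h t - c - q t / Z t = h t - c - q t / Z t" ..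
  qed (simp add: Z_def)
qed

lemma solP_props:
  assumes "sol_P h q c z" "z 1 < 0"
  shows "continuous_on {0<..1} z" "\<forall>t\<in>{0<..<1}. (z has_real_derivative h t - c - q t / z t) (at t)"
    "\<forall>t\<in>{0<..1}. z t < 0" "continuous_on {0..1} z" "z 0 = 0"
proof -
  have zc: "continuous_on {0..1} z" and zn: "\<forall>x\<in>{0<..<1}. z x < 0" and z0: "z 0 = 0"
    and ex: "\<exists>z'. continuous_on {0<..<1} z' \<and> (\<forall>x\<in>{0<..<1}. (z has_real_derivative z' x) (at x) \<and> z' x = h x - c - q x / z x)"
    using assms(1) unfolding sol_P_def by blast+
  show "continuous_on {0..1} z" "z 0 = 0" by fact+
  show "continuous_on {0<..1} z" by (rule continuous_on_subset[OF zc]) auto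
  show "\<forall>t\<in>{0<..<1}. (z has_real_derivative h t - c - q t / z t) (at t)" using ex by metis
  show "\<forall>t\<in>{0<..1}. z t < 0"
  proof
    fix t :: real assume "t \<in> {0<..1}"
    thus "z t < 0" using zn assms(2) by (cases "t = 1") auto
  qed
qed

lemma order01:
  assumes c1: "continuous_on {0<..1} y1" and d1: "\<forall>t\<in>{0<..<1}. (y1 has_real_derivative h t - c - q t / y1 t) (at t)"
    and n1: "\<forall>t\<in>{0<..1}. y1 t < 0"
    and c2: "continuous_on {0<..1} y2" and d2: "\<forall>t\<in>{0<..<1}. (y2 has_real_derivative h t - c - q t / y2 t) (at t)"
    and n2: "\<forall>t\<in>{0<..1}. y2 t < 0"
    and le: "y2 1 \<le> y1 1" and t: "t \<in> {0<..1}"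
  shows "0 \<le> y1 t - y2 t \<and> y1 t - y2 t \<le> y1 1 - y2 1 \<and> (y2 1 < y1 1 \<longrightarrow> y2 t < y1 t)"
proof (cases "t = 1")
  case True thus ?thesis using le by auto
next
  case False
  hence tt: "0 \<le> t" "t < 1" using t by auto
  have s1: "{t..1} \<subseteq> {0<..1}" "{t<..<1} \<subseteq> {0<..<1}" using t by auto
  show ?thesis
  proof (rule lin_order[OF tt order_refl, of y1 y2 t])
    show "continuous_on {t..1} y1" by (rule continuous_on_subset[OF c1 s1(1)])
    show "continuous_on {t..1} y2" by (rule continuous_on_subset[OF c2 s1(1)])
    show "\<forall>s\<in>{t<..<1}. (y1 has_real_derivative h s - c - q s / y1 s) (at s)" using d1 s1 by blast
    show "\<forall>s\<in>{t<..<1}. (y2 has_real_derivative h s - c - q s / y2 s) (at s)" using d2 s1 by blast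
    show "\<forall>s\<in>{t..1}. y1 s < 0" using n1 s1 by blast
    show "\<forall>s\<in>{t..1}. y2 s < 0" using n2 s1 by blast
  qed (use le tt in auto)
qed

lemma lim_help:
  fixes w z :: "real \<Rightarrow> real" and k e r :: real
  assumes wc: "continuous_on {0..1} w" and w0: "w 0 = 0" and r: "0 < r"
    and bnd: "\<forall>t\<in>{0<..r}. w t - k \<le> z t" and ke: "k < e"
  shows "\<exists>d>0. \<forall>t. 0 < t \<and> t < d \<longrightarrow> -e < z t"
proof -
  have e': "e - k > 0" using ke by simp
  have "(0::real) \<in> {0..1}" by simp
  then obtain d where d: "d > 0" "\<forall>x'\<in>{0..1}. dist x' 0 < d \<longrightarrow> dist (w x') (w 0) < e - k"
    using wc e' unfolding continuous_on_iff by blast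
  show ?thesis
  proof (intro exI[of _ "min d (min r 1)"] conjI allI impI)
    show "min d (min r 1) > 0" using d r by simp
    fix t :: real assume t: "0 < t \<and> t < min d (min r 1)"
    hence "t \<in> {0..1}" "dist t 0 < d" by (auto simp: dist_real_def)
    hence "\<bar>w t\<bar> < e - k" using d w0 by (auto simp: dist_real_def)
    moreover have "w t - k \<le> z t" using bnd t by auto
    ultimately show "-e < z t" by linarith
  qed
qed

lemma sol_uniq:
  assumes s1: "sol_P h q c z1" and s2: "sol_P h q c z2" and b: "z1 1 = b" "z2 1 = b" "b < 0"
    and t: "t \<in> {0..1}"
  shows "z1 t = z2 t"
proof (cases "t = 0")
  case True thus ?thesis using solP_props(5)[OF s1] solP_props(5)[OF s2] b by simp
next
  case False
  hence t': "t \<in> {0<..1}" using t by auto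
  have n1: "z1 1 < 0" and n2: "z2 1 < 0" using b by auto
  show ?thesis
    using order01[OF solP_props(1-3)[OF s1 n1] solP_props(1-3)[OF s2 n2] _ t'] b by auto
qed

lemma up_closed:
  assumes s: "sol_P h q c z" and zb: "z 1 = b" and bb: "b < b'" "b' < 0"
  shows "\<exists>z. sol_P h q c z \<and> z 1 = b'"
proof -
  have n1: "z 1 < 0" using zb bb by auto
  obtain y where yc: "continuous_on {0<..1} y" and yd: "\<forall>t\<in>{0<..<1}. (y has_real_derivative h t - c - q t / y t) (at t)"
    and yn: "\<forall>t\<in>{0<..1}. y t < 0" and y1: "y 1 = b'"
    using backsol[OF bb(2)] by blast
  have ord: "z t < y t" if "t \<in> {0<..1}" for t
    using order01[OF yc yd yn solP_props(1-3)[OF s n1] _ that] zb y1 bb by auto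
  have lim: "\<forall>e>0. \<exists>d>0. \<forall>t. 0 < t \<and> t < d \<longrightarrow> -e < y t"
  proof (intro allI impI)
    fix e :: real assume "e > 0"
    thus "\<exists>d>0. \<forall>t. 0 < t \<and> t < d \<longrightarrow> -e < y t"
      by (intro lim_help[OF solP_props(4,5)[OF s n1] zero_less_one, of 0]) (use ord in \<open>auto simp: less_imp_le\<close>)
  qed
  show ?thesis using to_sol[OF yc yd yn lim] y1 by (intro exI[of _ "\<lambda>t. if t = 0 then 0 else y t"]) auto
qed

lemma closed_inf:
  assumes \<beta>: "\<beta> < 0"
    and approx: "\<forall>e>0. \<exists>b z. sol_P h q c z \<and> z 1 = b \<and> \<beta> \<le> b \<and> b < \<beta> + e \<and> b < 0"
  shows "\<exists>z. sol_P h q c z \<and> z 1 = \<beta>"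
proof -
  obtain y where yc: "continuous_on {0<..1} y" and yd: "\<forall>t\<in>{0<..<1}. (y has_real_derivative h t - c - q t / y t) (at t)"
    and yn: "\<forall>t\<in>{0<..1}. y t < 0" and y1: "y 1 = \<beta>"
    using backsol[OF \<beta>] by blast
  have lim: "\<forall>e>0. \<exists>d>0. \<forall>t. 0 < t \<and> t < d \<longrightarrow> -e < y t"
  proof (intro allI impI)
    fix e :: real assume "e > 0"
    then obtain b z where s: "sol_P h q c z" and zb: "z 1 = b" and bb: "\<beta> \<le> b" "b < \<beta> + e" "b < 0"
      using approx by blast
    have n1: "z 1 < 0" using zb bb by auto
    have ord: "z t - (b - \<beta>) \<le> y t" if "t \<in> {0<..1}" for t
      using order01[OF solP_props(1-3)[OF s n1] yc yd yn _ that] zb y1 bb by auto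
    show "\<exists>d>0. \<forall>t. 0 < t \<and> t < d \<longrightarrow> -e < y t"
      by (rule lim_help[OF solP_props(4,5)[OF s n1] zero_less_one, of "b - \<beta>"]) (use ord bb in auto)
  qed
  show ?thesis using to_sol[OF yc yd yn lim] y1 by (intro exI[of _ "\<lambda>t. if t = 0 then 0 else y t"]) auto
qed

lemma nonempty_sol:
  assumes v: "sol_P00 h q c' v" and cc: "c' < c"
  shows "\<exists>z. sol_P h q c z \<and> z 1 < 0"
proof -
  have vc: "continuous_on {0..1} v" and vn: "\<forall>x\<in>{0<..<1}. v x < 0" and v0: "v 0 = 0" and v1: "v 1 = 0"
    and vex: "\<exists>z'. continuous_on {0<..<1} z' \<and> (\<forall>x\<in>{0<..<1}. (v has_real_derivative z' x) (at x) \<and> z' x = h x - c' - q x / v x)"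
    using v unfolding sol_P00_def sol_P_def by blast+
  have vd: "\<forall>t\<in>{0<..<1}. (v has_real_derivative h t - c' - q t / v t) (at t)" using vex by metis
  define b0 where "b0 = -(c - c')/2"
  have b0: "b0 < 0" unfolding b0_def using cc by simp
  obtain z where zc: "continuous_on {0<..1} z" and zd: "\<forall>t\<in>{0<..<1}. (z has_real_derivative h t - c - q t / z t) (at t)"
    and zn: "\<forall>t\<in>{0<..1}. z t < 0" and z1: "z 1 = b0"
    using backsol[OF b0] by blast
  define w where "w t = z t - v t" for t
  have wd: "(w has_real_derivative (h t - c - q t / z t) - (h t - c' - q t / v t)) (at t)" if "t \<in> {0<..<1}" for t
    unfolding w_def using zd vd that by (auto intro!: derivative_eq_intros)
  have wdle: "(h t - c - q t / z t) - (h t - c' - q t / v t) \<le> -(c - c')" if t: "t \<in> {0<..<1}" and le: "z t \<le> v t" for t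
  proof -
    have "v t < 0" "z t < 0" using vn zn t by auto
    hence "1 / v t \<le> 1 / z t" using le by (simp add: divide_simps)
    moreover have "q t \<ge> 0" using qnn[of t] t by auto
    ultimately have "q t / v t \<le> q t / z t" by (metis mult_left_mono times_divide_eq_right mult.right_neutral)
    thus ?thesis by simp
  qed
  have step1: "\<exists>p\<in>{0<..<1}. v p < z p"
  proof (rule ccontr)
    assume "\<not> (\<exists>p\<in>{0<..<1}. v p < z p)"
    hence le: "\<forall>p\<in>{0<..<1}. z p \<le> v p" by auto
    have c1: "continuous_on {1/4..1} (\<lambda>s. - w s - (c - c') * s)"
      unfolding w_def
      by (intro continuous_intros continuous_on_subset[OF zc] continuous_on_subset[OF vc]) auto
    have d1: "\<exists>l. ((\<lambda>s. - w s - (c - c') * s) has_real_derivative l) (at x) \<and> 0 \<le> l" if "1/4 < x" "x < 1" for x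
    proof -
      have x: "x \<in> {0<..<1}" using that by auto
      have "((\<lambda>s. - w s - (c - c') * s) has_real_derivative
          - ((h x - c - q x / z x) - (h x - c' - q x / v x)) - (c - c')) (at x)"
        using wd[OF x] by (auto intro!: derivative_eq_intros)
      moreover have "0 \<le> - ((h x - c - q x / z x) - (h x - c' - q x / v x)) - (c - c')"
        using wdle[OF x] le x by force
      ultimately show ?thesis by blast
    qed
    have "- w (1/4) - (c - c') * (1/4) \<le> - w 1 - (c - c') * 1"
      using DERIV_nonneg_imp_increasing_open[of "1/4" 1 "\<lambda>s. - w s - (c - c') * s", OF _ d1 c1] by auto
    moreover have "w 1 = b0" unfolding w_def using z1 v1 by simp
    moreover have "w (1/4) \<le> 0" unfolding w_def using le by auto
    ultimately show False unfolding b0_def using cc by (simp add: field_simps)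
  qed
  then obtain p where p: "p \<in> {0<..<1}" "v p < z p" by blast
  have step2: "v t \<le> z t" if t: "t \<in> {0<..p}" for t
  proof (rule ccontr)
    assume "\<not> v t \<le> z t"
    hence wt: "w t \<le> 0" unfolding w_def by simp
    define A where "A = {t..p} \<inter> w -` {..0}"
    have subA: "{t..p} \<subseteq> {0<..1}" using t p by auto
    have wc: "continuous_on {t..p} w" unfolding w_def
      by (intro continuous_intros continuous_on_subset[OF zc subA] continuous_on_subset[OF vc]) (use t p in auto)
    have "closed A" unfolding A_def by (rule continuous_closed_preimage[OF wc]) auto
    moreover have "bounded A" unfolding A_def by (rule bounded_subset[of "{t..p}"]) auto
    ultimately have "compact A" by (simp add: compact_eq_bounded_closed)
    moreover have "t \<in> A" unfolding A_def using t wt by auto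
    ultimately obtain s where sA: "s \<in> A" and smax: "\<forall>x\<in>A. x \<le> s"
      using compact_attains_sup by blast
    have s: "t \<le> s" "s \<le> p" "w s \<le> 0" using sA unfolding A_def by auto
    have "s \<noteq> p" using s p unfolding w_def by auto
    hence sp: "s < p" using s by auto
    have sin: "s \<in> {0<..<1}" using s sp t p by auto
    have "(h s - c - q s / z s) - (h s - c' - q s / v s) \<le> -(c - c')"
      using wdle[OF sin] s unfolding w_def by simp
    hence neg: "(h s - c - q s / z s) - (h s - c' - q s / v s) < 0" using cc by linarith
    obtain d where d: "d > 0" "\<forall>h>0. h < d \<longrightarrow> w (s + h) < w s"
      using DERIV_neg_dec_right[OF wd[OF sin] neg] by blast
    define \<tau> where "\<tau> = min (d/2) (p - s)"
    have \<tau>: "\<tau> > 0" "\<tau> < d" "s + \<tau> \<le> p" unfolding \<tau>_def using d sp by auto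
    hence "w (s + \<tau>) < w s" using d by auto
    hence "s + \<tau> \<in> A" unfolding A_def using s \<tau> by auto
    thus False using smax \<tau> by force
  qed
  have lim: "\<forall>e>0. \<exists>d>0. \<forall>t. 0 < t \<and> t < d \<longrightarrow> -e < z t"
  proof (intro allI impI)
    fix e :: real assume e: "e > 0"
    show "\<exists>d>0. \<forall>t. 0 < t \<and> t < d \<longrightarrow> -e < z t"
      by (rule lim_help[OF vc v0, of p 0 z e]) (use p step2 e in auto)
  qed
  show ?thesis using to_sol[OF zc zd zn lim] z1 b0 by (intro exI[of _ "\<lambda>t. if t = 0 then 0 else z t"]) auto
qed
end


lemma lower_bound:
  fixes f h q z :: "real \<Rightarrow> real"
  assumes f_deriv: "\<forall>x\<in>{0..1}. (f has_real_derivative h x) (at x within {0..1})" and f0: "f 0 = 0"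
    and qp: "\<forall>t\<in>{0<..<1}. q t > 0" and s: "sol_P h q c z"
  shows "f 1 - c \<le> z 1"
proof -
  have zc: "continuous_on {0..1} z" and zn: "\<forall>x\<in>{0<..<1}. z x < 0" and z0: "z 0 = 0"
    and ex: "\<exists>z'. continuous_on {0<..<1} z' \<and> (\<forall>x\<in>{0<..<1}. (z has_real_derivative z' x) (at x) \<and> z' x = h x - c - q x / z x)"
    using s unfolding sol_P_def by blast+
  have zd: "\<forall>t\<in>{0<..<1}. (z has_real_derivative h t - c - q t / z t) (at t)" using ex by metis
  have fc: "continuous_on {0..1} f" by (rule DERIV_continuous_on) (use f_deriv in blast)
  have gc: "continuous_on {0..1} (\<lambda>s. z s - f s + c * s)" by (intro continuous_intros zc fc)
  have gd: "\<exists>l. ((\<lambda>s. z s - f s + c * s) has_real_derivative l) (at x) \<and> 0 \<le> l" if x: "0 < x" "x < 1" for x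
  proof -
    have xx: "x \<in> {0..1}" "x \<in> {0<..<1}" using x by auto
    have "(f has_real_derivative h x) (at x within {0..1})" using f_deriv xx by blast
    hence fd: "(f has_real_derivative h x) (at x)" using at_within_Icc_at[of 0 x 1] x by simp
    have "((\<lambda>s. z s - f s + c * s) has_real_derivative (h x - c - q x / z x) - h x + c * 1) (at x)"
      using zd xx by (auto intro!: derivative_eq_intros fd)
    moreover have "q x / z x \<le> 0" using qp zn xx by (intro divide_nonneg_neg) (auto simp: less_imp_le)
    ultimately show ?thesis by (intro exI[of _ "(h x - c - q x / z x) - h x + c * 1"]) auto
  qed
  have "z 0 - f 0 + c * 0 \<le> z 1 - f 1 + c * 1"
    using DERIV_nonneg_imp_increasing_open[of 0 1 "\<lambda>s. z s - f s + c * s", OF _ gd gc] by auto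
  thus ?thesis using z0 f0 by simp
qed

theorem proposition5p1:
  fixes f h q :: "real \<Rightarrow> real" and cstar :: real
  assumes f_deriv: "\<forall>x\<in>{0..1}. (f has_real_derivative h x) (at x within {0..1})"
    and h_cont: "continuous_on {0..1} h"
    and f0: "f 0 = 0"
    and q: "cond_q q"
    and cstar: "\<forall>c. (\<exists>z. sol_P00 h q c z) \<longleftrightarrow> c \<ge> cstar"
  shows "\<forall>c>cstar. \<exists>\<beta><0. \<beta> \<ge> f 1 - c \<and>
           (\<forall>b<0. ((\<exists>z. sol_P h q c z \<and> z 1 = b) \<longleftrightarrow> b \<ge> \<beta>) \<and>
                   (\<forall>z1 z2. sol_P h q c z1 \<and> z1 1 = b \<and> sol_P h q c z2 \<and> z2 1 = b
                        \<longrightarrow> (\<forall>x\<in>{0..1}. z1 x = z2 x)))"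
proof (intro allI impI)
  have qc: "continuous_on {0..1} q" and qp: "\<forall>x\<in>{0<..<1}. q x > 0" and q0: "q 0 = 0" and q1: "q 1 = 0"
    using q unfolding cond_q_def by auto
  note H = h_cont qc qp q0 q1
  fix c assume cgt: "cstar < c"
  obtain v where v: "sol_P00 h q cstar v" using cstar by auto
  define S where "S = {b. b < 0 \<and> (\<exists>z. sol_P h q c z \<and> z 1 = b)}"
  obtain z0 where z0: "sol_P h q c z0" "z0 1 < 0" using nonempty_sol[OF H v cgt] by blast
  have z0S: "z0 1 \<in> S" unfolding S_def using z0 by auto
  hence Sne: "S \<noteq> {}" by auto
  have lowS: "\<forall>b\<in>S. f 1 - c \<le> b" unfolding S_def using lower_bound[OF f_deriv f0 qp] by blast
  hence bdd: "bdd_below S" by (auto simp: bdd_below_def)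
  define \<beta> where "\<beta> = Inf S"
  have bge: "f 1 - c \<le> \<beta>" unfolding \<beta>_def by (rule cInf_greatest[OF Sne]) (use lowS in auto)
  have ble: "\<beta> \<le> b" if "b \<in> S" for b unfolding \<beta>_def by (rule cInf_lower[OF that bdd])
  have bneg: "\<beta> < 0" using ble[OF z0S] z0 by auto
  have approx: "\<forall>e>0. \<exists>b z. sol_P h q c z \<and> z 1 = b \<and> \<beta> \<le> b \<and> b < \<beta> + e \<and> b < 0"
  proof (intro allI impI)
    fix e :: real assume e: "e > 0"
    have "Inf S < \<beta> + e" using e unfolding \<beta>_def by simp
    then obtain b where b: "b \<in> S" "b < \<beta> + e" using cInf_lessD[OF Sne] by blast
    thus "\<exists>b z. sol_P h q c z \<and> z 1 = b \<and> \<beta> \<le> b \<and> b < \<beta> + e \<and> b < 0"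
      using ble[OF b(1)] unfolding S_def by blast
  qed
  obtain z\<beta> where zb: "sol_P h q c z\<beta>" "z\<beta> 1 = \<beta>" using closed_inf[OF H bneg approx] by blast
  show "\<exists>\<beta><0. \<beta> \<ge> f 1 - c \<and>
           (\<forall>b<0. ((\<exists>z. sol_P h q c z \<and> z 1 = b) \<longleftrightarrow> b \<ge> \<beta>) \<and>
                   (\<forall>z1 z2. sol_P h q c z1 \<and> z1 1 = b \<and> sol_P h q c z2 \<and> z2 1 = b
                        \<longrightarrow> (\<forall>x\<in>{0..1}. z1 x = z2 x)))"
  proof (intro exI[of _ \<beta>] conjI allI impI ballI bneg bge)
    fix b :: real assume b: "b < 0"
    show "(\<exists>z. sol_P h q c z \<and> z 1 = b) \<longleftrightarrow> b \<ge> \<beta>"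
    proof
      assume "\<exists>z. sol_P h q c z \<and> z 1 = b"
      hence "b \<in> S" unfolding S_def using b by auto
      thus "\<beta> \<le> b" by (rule ble)
    next
      assume bb: "\<beta> \<le> b"
      show "\<exists>z. sol_P h q c z \<and> z 1 = b"
      proof (cases "b = \<beta>")
        case True thus ?thesis using zb by blast
      next
        case False
        hence "\<beta> < b" using bb by auto
        thus ?thesis using up_closed[OF H zb(1) zb(2) _ b] by blast
      qed
    qed
  next
    fix b :: real and z1 z2 :: "real \<Rightarrow> real" and x :: real assume b: "b < 0"
      and zz: "sol_P h q c z1 \<and> z1 1 = b \<and> sol_P h q c z2 \<and> z2 1 = b" and x: "x \<in> {0..1}"
    show "z1 x = z2 x" using sol_uniq[OF H] zz b x by blast
  qed
qed

end
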